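(* Let $G=(V,E)$ be a connected, simple, undirected, unweighted graph and $S\subseteq V$ with $|S|\ge2$. For $u\in V$ let $\deg_S(u)$ be the number of neighbors of $u$ in $S$, and define the $V\times V$ matrix $R$ by $R[u,v]=1$ if $u=v$ and $\deg_S(u)=0$; $R[u,v]=1/\deg_S(u)$ if $\{u,v\}\in E$ and $v\in S$; and $R[u,v]=0$ otherwise. Let $\mathbf{Q}$ be the transition matrix of $\textsc{ShortCut}(G,S)$ and $\mathbf{S}$ that of $\textsc{Schur}(G,S)$. Then for all $u\in S$, $(\mathbf{Q}R)[u,u]<1$, and for all $u\neq v$ in $S$, $$\mathbf{S}[u,v]=\frac{(\mathbf{Q}R)[u,v]}{1-(\mathbf{Q}R)[u,u]},$$ where $(\mathbf{Q}R)[u,u]$ equals the probability that a simple random walk on $G$ started at $u$ returns to $u$ before visiting any other vertex of $S$.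
   Context: The shortcut graph: for $u\in V$, let $x_0=u,x_1,\dots$ be a simple random walk on $G$ and $j=\min\{i>0:x_i\in S\}$; $\mathbf{Q}[u,v]=\Pr[x_{j-1}=v]$. The Schur complement transition matrix: for $u\ne v\in S$, $\mathbf{S}[u,v]$ is the probability that $v$ is the first vertex of $S\setminus\{u\}$ visited by a simple random walk on $G$ started at $u$, and $\mathbf{S}[u,u]=0$. *)

theory Defs
  imports "HOL-Analysis.Analysis"
begin

definition simple_connected_graph :: "'a set \<Rightarrow> ('a \<Rightarrow> 'a \<Rightarrow> bool) \<Rightarrow> bool" where
  "simple_connected_graph V E \<longleftrightarrow>
     finite V \<and> (\<forall>x y. E x y \<longrightarrow> x \<in> V \<and> y \<in> V) \<and>
     (\<forall>x y. E x y \<longrightarrow> E y x) \<and> (\<forall>x. \<not> E x x) \<and>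
     (\<forall>x\<in>V. \<forall>y\<in>V. E\<^sup>*\<^sup>* x y)"

definition deg :: "'a set \<Rightarrow> ('a \<Rightarrow> 'a \<Rightarrow> bool) \<Rightarrow> 'a \<Rightarrow> nat" where
  "deg V E x = card {y \<in> V. E x y}"

definition degS :: "('a \<Rightarrow> 'a \<Rightarrow> bool) \<Rightarrow> 'a set \<Rightarrow> 'a \<Rightarrow> nat" where
  "degS E S x = card {y \<in> S. E x y}"

definition trans_prob :: "'a set \<Rightarrow> ('a \<Rightarrow> 'a \<Rightarrow> bool) \<Rightarrow> 'a \<Rightarrow> 'a \<Rightarrow> real" where
  "trans_prob V E x y = (if E x y then 1 / real (deg V E x) else 0)"

text \<open>probability that the simple random walk started at hd xs follows the
finite trajectory xs (i.e. the probability of the corresponding cylinder event)\<close>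
fun walk_prob :: "'a set \<Rightarrow> ('a \<Rightarrow> 'a \<Rightarrow> bool) \<Rightarrow> 'a list \<Rightarrow> real" where
  "walk_prob V E (x # y # xs) = trans_prob V E x y * walk_prob V E (y # xs)"
| "walk_prob V E _ = 1"

text \<open>Probability of the event described by a set A of finite trajectories
(pairwise non-prefix, i.e. describing a disjoint union of cylinder events),
for the random walk started at u.\<close>
definition event_prob :: "'a set \<Rightarrow> ('a \<Rightarrow> 'a \<Rightarrow> bool) \<Rightarrow> 'a list set \<Rightarrow> real" where
  "event_prob V E A = (\<Sum>\<^sub>\<infinity> xs \<in> A. walk_prob V E xs)"

definition first_entry_paths :: "'a set \<Rightarrow> 'a set \<Rightarrow> 'a \<Rightarrow> 'a list set" where
  "first_entry_paths V T u =
     {xs. length xs \<ge> 2 \<and> set xs \<subseteq> V \<and> hd xs = u \<and> last xs \<in> T \<and>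
          (\<forall>i. 0 < i \<and> i < length xs - 1 \<longrightarrow> xs ! i \<notin> T)}"

text \<open>Transition matrix of ShortCut(G,S): Q[u,v] = Pr[x_{j-1} = v],
j = min {i > 0. x_i \<in> S}.\<close>
definition shortcut_Q :: "'a set \<Rightarrow> ('a \<Rightarrow> 'a \<Rightarrow> bool) \<Rightarrow> 'a set \<Rightarrow> 'a \<Rightarrow> 'a \<Rightarrow> real" where
  "shortcut_Q V E S u v =
     event_prob V E {xs \<in> first_entry_paths V S u. xs ! (length xs - 2) = v}"

definition schur_S :: "'a set \<Rightarrow> ('a \<Rightarrow> 'a \<Rightarrow> bool) \<Rightarrow> 'a set \<Rightarrow> 'a \<Rightarrow> 'a \<Rightarrow> real" where
  "schur_S V E S u v =
     (if u = v then 0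
      else event_prob V E {xs \<in> first_entry_paths V (S - {u}) u. last xs = v})"

definition R_mat :: "('a \<Rightarrow> 'a \<Rightarrow> bool) \<Rightarrow> 'a set \<Rightarrow> 'a \<Rightarrow> 'a \<Rightarrow> real" where
  "R_mat E S u v =
     (if u = v \<and> degS E S u = 0 then 1
      else if E u v \<and> v \<in> S then 1 / real (degS E S u)
      else 0)"

definition mat_mult :: "'a set \<Rightarrow> ('a \<Rightarrow> 'a \<Rightarrow> real) \<Rightarrow> ('a \<Rightarrow> 'a \<Rightarrow> real) \<Rightarrow> 'a \<Rightarrow> 'a \<Rightarrow> real" where
  "mat_mult V A B u v = (\<Sum>w\<in>V. A u w * B w v)"

end

theory Submission
  imports Defs
begin


lemma walk_prob_nonneg: "walk_prob V E xs \<ge> 0"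
  by (induction V E xs rule: walk_prob.induct) (auto simp: trans_prob_def)

lemma walk_prob_append: "walk_prob V E (xs @ y # ys) = walk_prob V E (xs @ [y]) * walk_prob V E (y # ys)"
proof (induction xs)
  case Nil then show ?case by simp
next
  case (Cons a xs) then show ?case by (cases xs) auto
qed

lemma walk_prob_snoc: "xs \<noteq> [] \<Longrightarrow> walk_prob V E (xs @ [y]) = walk_prob V E xs * trans_prob V E (last xs) y"
proof (induction xs)
  case Nil then show ?case by simp
next
  case (Cons a xs) then show ?case by (cases xs) auto
qed



definition Mid :: "'a set \<Rightarrow> 'a set \<Rightarrow> 'a list set" where
  "Mid V T = {m. set m \<subseteq> V - T}"

lemma fep_char:
  "xs \<in> first_entry_paths V T u \<longleftrightarrow>
     (\<exists>m v. xs = u # m @ [v] \<and> u \<in> V \<and> set m \<subseteq> V - T \<and> v \<in> V \<and> v \<in> T)"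
proof
  assume xs: "xs \<in> first_entry_paths V T u"
  then have len: "length xs \<ge> 2" and sV: "set xs \<subseteq> V" and hd: "hd xs = u" and lst: "last xs \<in> T"
    and int: "\<And>i. 0 < i \<Longrightarrow> i < length xs - 1 \<Longrightarrow> xs ! i \<notin> T"
    unfolding first_entry_paths_def by auto
  obtain ys where ys: "xs = u # ys" using len hd by (cases xs) auto
  have "ys \<noteq> []" using len ys by auto
  then obtain m v where mv: "ys = m @ [v]" by (metis append_butlast_last_id)
  have xsmv: "xs = u # m @ [v]" using ys mv by simp
  have "set m \<subseteq> V - T"
  proof
    fix x assume "x \<in> set m"
    then obtain k where k: "k < length m" "m ! k = x" by (auto simp: in_set_conv_nth)
    have "xs ! (Suc k) = x" using k xsmv by (simp add: nth_append)
    moreover have "xs ! (Suc k) \<notin> T" using int[of "Suc k"] k xsmv by simp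
    moreover have "x \<in> V" using sV xsmv \<open>x \<in> set m\<close> by auto
    ultimately show "x \<in> V - T" by auto
  qed
  then show "\<exists>m v. xs = u # m @ [v] \<and> u \<in> V \<and> set m \<subseteq> V - T \<and> v \<in> V \<and> v \<in> T"
    using xsmv sV lst by auto
next
  assume "\<exists>m v. xs = u # m @ [v] \<and> u \<in> V \<and> set m \<subseteq> V - T \<and> v \<in> V \<and> v \<in> T"
  then obtain m v where h: "xs = u # m @ [v]" "u \<in> V" "set m \<subseteq> V - T" "v \<in> V" "v \<in> T" by blast
  have "\<And>i. 0 < i \<Longrightarrow> i < length xs - 1 \<Longrightarrow> xs ! i \<notin> T"
  proof -
    fix i assume i: "0 < i" "i < length xs - 1"
    then obtain k where k: "i = Suc k" by (cases i) auto
    have "xs ! i = m ! k" using h i k by (simp add: nth_append)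
    moreover have "m ! k \<in> set m" using h i k by simp
    ultimately show "xs ! i \<notin> T" using h by auto
  qed
  then show "xs \<in> first_entry_paths V T u" using h unfolding first_entry_paths_def by auto
qed

lemma nth_len_m: "(u # m @ [y]) ! length m = last (u # m)"
  by (induction m arbitrary: u) (auto simp: nth_append)

lemma event_last:
  "{xs \<in> first_entry_paths V T u. last xs = v} =
     (if u \<in> V \<and> v \<in> V \<and> v \<in> T then (\<lambda>m. u # m @ [v]) ` Mid V T else {})"
  unfolding Mid_def by (auto simp: fep_char)

lemma event_last_prob:
  "event_prob V E {xs \<in> first_entry_paths V T u. last xs = v} =
     (if u \<in> V \<and> v \<in> V \<and> v \<in> T then infsum (\<lambda>m. walk_prob V E (u # m @ [v])) (Mid V T) else 0)"
proof -
  have "inj_on (\<lambda>m. u # m @ [v]) (Mid V T)" by (auto simp: inj_on_def)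
  then show ?thesis unfolding event_prob_def event_last
    by (auto simp: infsum_reindex o_def)
qed



lemma trans_nonneg: "trans_prob V E x y \<ge> 0"
  by (simp add: trans_prob_def)

lemma trans_sum:
  assumes G: "simple_connected_graph V E" and x: "x \<in> V" and dp: "deg V E x > 0"
  shows "(\<Sum>y\<in>V. trans_prob V E x y) = 1"
proof -
  have fin: "finite V" using G by (simp add: simple_connected_graph_def)
  have "(\<Sum>y\<in>V. trans_prob V E x y) = (\<Sum>y\<in>{y\<in>V. E x y}. 1 / real (deg V E x))"
    by (subst sum.inter_filter[OF fin]) (simp add: trans_prob_def)
  also have "\<dots> = 1" using dp by (simp add: deg_def)
  finally show ?thesis .
qed

lemma trans_sum_le:
  assumes G: "simple_connected_graph V E" and dp: "\<forall>x\<in>V. deg V E x > 0" and Y: "Y \<subseteq> V"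
  shows "(\<Sum>y\<in>Y. trans_prob V E x y) \<le> 1"
proof (cases "x \<in> V")
  case True
  have fin: "finite V" using G by (simp add: simple_connected_graph_def)
  have "(\<Sum>y\<in>Y. trans_prob V E x y) \<le> (\<Sum>y\<in>V. trans_prob V E x y)"
    by (rule sum_mono2[OF fin Y]) (simp add: trans_nonneg)
  then show ?thesis using trans_sum[OF G True] dp True by simp
next
  case False
  then have "\<forall>y. \<not> E x y" using G by (auto simp: simple_connected_graph_def)
  then show ?thesis by (simp add: trans_prob_def)
qed

definition Ln :: "'a set \<Rightarrow> 'a set \<Rightarrow> nat \<Rightarrow> 'a list set" where
  "Ln V T n = {m. set m \<subseteq> V - T \<and> length m \<le> n}"

lemma Ln_finite: "finite V \<Longrightarrow> finite (Ln V T n)"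
  unfolding Ln_def by (rule finite_lists_length_le) simp

lemma Ln_Suc: "Ln V T (Suc n) = insert [] ((\<lambda>(y,m). y # m) ` ((V - T) \<times> Ln V T n))"
  unfolding Ln_def
  apply (rule set_eqI)
  subgoal for xs by (cases xs) auto
  done

lemma Ln_bound:
  assumes G: "simple_connected_graph V E" and dp: "\<forall>x\<in>V. deg V E x > 0"
  shows "(\<Sum>m\<in>Ln V T n. \<Sum>v\<in>V\<inter>T. walk_prob V E (x # m @ [v])) \<le> 1"
proof (induction n arbitrary: x)
  have fin: "finite V" using G by (simp add: simple_connected_graph_def)
  case 0
  have "Ln V T 0 = {[]}" unfolding Ln_def by auto
  then show ?case using trans_sum_le[OF G dp, of "V \<inter> T" x] by simp
next
  have fin: "finite V" using G by (simp add: simple_connected_graph_def)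
  case (Suc n)
  let ?f = "\<lambda>m. \<Sum>v\<in>V\<inter>T. walk_prob V E (x # m @ [v])"
  have inj: "inj_on (\<lambda>(y,m). y # m) ((V - T) \<times> Ln V T n)" by (auto simp: inj_on_def)
  have nin: "[] \<notin> (\<lambda>(y,m). y # m) ` ((V - T) \<times> Ln V T n)" by auto
  have finP: "finite ((V - T) \<times> Ln V T n)" using fin Ln_finite[OF fin] by auto
  have "(\<Sum>m\<in>Ln V T (Suc n). ?f m) = ?f [] + (\<Sum>p\<in>(V - T) \<times> Ln V T n. ?f ((\<lambda>(y,m). y # m) p))"
    unfolding Ln_Suc using finP nin inj by (simp add: sum.reindex)
  also have "(\<Sum>p\<in>(V - T) \<times> Ln V T n. ?f ((\<lambda>(y,m). y # m) p))
      = (\<Sum>y\<in>V - T. trans_prob V E x y * (\<Sum>m\<in>Ln V T n. \<Sum>v\<in>V\<inter>T. walk_prob V E (y # m @ [v])))"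
  proof -
    have "(\<Sum>p\<in>(V - T) \<times> Ln V T n. ?f ((\<lambda>(y,m). y # m) p)) = (\<Sum>(y,m)\<in>(V - T) \<times> Ln V T n. ?f (y # m))"
      by (rule sum.cong) auto
    also have "\<dots> = (\<Sum>y\<in>V - T. \<Sum>m\<in>Ln V T n. ?f (y # m))"
      by (rule sum.cartesian_product[symmetric])
    also have "\<dots> = (\<Sum>y\<in>V - T. trans_prob V E x y * (\<Sum>m\<in>Ln V T n. \<Sum>v\<in>V\<inter>T. walk_prob V E (y # m @ [v])))"
      by (simp add: sum_distrib_left)
    finally show ?thesis .
  qed
  also have "\<dots> \<le> (\<Sum>y\<in>V - T. trans_prob V E x y)"
    by (rule sum_mono) (metis Suc.IH trans_nonneg mult_left_le)
  also have "?f [] = (\<Sum>y\<in>V \<inter> T. trans_prob V E x y)" by simp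
  finally have "(\<Sum>m\<in>Ln V T (Suc n). ?f m) \<le> (\<Sum>y\<in>V \<inter> T. trans_prob V E x y) + (\<Sum>y\<in>V - T. trans_prob V E x y)"
    by simp
  also have "\<dots> = (\<Sum>y\<in>V. trans_prob V E x y)"
    using fin by (subst sum.union_disjoint[symmetric]) (auto intro: sum.cong)
  also have "\<dots> \<le> 1" using trans_sum_le[OF G dp, of V x] by simp
  finally show ?case .
qed



lemma fep_finite_bound:
  assumes G: "simple_connected_graph V E" and dp: "\<forall>x\<in>V. deg V E x > 0"
    and F: "finite F" "F \<subseteq> first_entry_paths V T x"
  shows "sum (walk_prob V E) F \<le> 1"
proof -
  have fin: "finite V" using G by (simp add: simple_connected_graph_def)
  obtain n where n: "\<forall>xs\<in>F. length xs \<le> n"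
    using F(1) by (metis finite_imageI finite_nat_set_iff_bounded_le imageI)
  let ?h = "\<lambda>(m,v). x # m @ [v]"
  let ?P = "Ln V T n \<times> (V \<inter> T)"
  have sub: "F \<subseteq> ?h ` ?P"
  proof
    fix xs assume xs: "xs \<in> F"
    then have "xs \<in> first_entry_paths V T x" using F(2) by auto
    then obtain m v where mv: "xs = x # m @ [v]" "set m \<subseteq> V - T" "v \<in> V" "v \<in> T"
      unfolding fep_char by blast
    have "length m \<le> n" using n xs mv by auto
    then have "(m, v) \<in> ?P" using mv by (auto simp: Ln_def)
    then show "xs \<in> ?h ` ?P" using mv by force
  qed
  have finP: "finite ?P" using Ln_finite[OF fin] fin by auto
  have inj: "inj_on ?h ?P" by (auto simp: inj_on_def)
  have "sum (walk_prob V E) F \<le> sum (walk_prob V E) (?h ` ?P)"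
    by (rule sum_mono2) (use finP sub walk_prob_nonneg in auto)
  also have "\<dots> = (\<Sum>(m,v)\<in>?P. walk_prob V E (x # m @ [v]))"
    using inj by (simp add: sum.reindex split_def)
  also have "\<dots> = (\<Sum>m\<in>Ln V T n. \<Sum>v\<in>V\<inter>T. walk_prob V E (x # m @ [v]))"
    by (rule sum.cartesian_product[symmetric])
  also have "\<dots> \<le> 1" by (rule Ln_bound[OF G dp])
  finally show ?thesis .
qed

lemma fep_summable:
  assumes G: "simple_connected_graph V E" and dp: "\<forall>x\<in>V. deg V E x > 0"
  shows "walk_prob V E summable_on first_entry_paths V T x"
  by (rule nonneg_bdd_above_summable_on)
     (use walk_prob_nonneg fep_finite_bound[OF G dp] in \<open>auto intro!: bdd_aboveI2\<close>)

lemma fep_le1: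
  assumes G: "simple_connected_graph V E" and dp: "\<forall>x\<in>V. deg V E x > 0"
  shows "infsum (walk_prob V E) (first_entry_paths V T x) \<le> 1"
  by (rule infsum_le_finite_sums[OF fep_summable[OF G dp]]) (use fep_finite_bound[OF G dp] in auto)

lemma sub_summable:
  assumes G: "simple_connected_graph V E" and dp: "\<forall>x\<in>V. deg V E x > 0"
    and "A \<subseteq> first_entry_paths V T x"
  shows "walk_prob V E summable_on A"
  by (rule summable_on_subset[OF fep_summable[OF G dp] assms(3)])

lemma mid_summable:
  assumes G: "simple_connected_graph V E" and dp: "\<forall>x\<in>V. deg V E x > 0"
    and u: "u \<in> V" and v: "v \<in> V" "v \<in> T"
  shows "(\<lambda>m. walk_prob V E (u # m @ [v])) summable_on Mid V T"
proof -
  have "walk_prob V E summable_on ((\<lambda>m. u # m @ [v]) ` Mid V T)"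
    by (rule sub_summable[OF G dp, of _ T u]) (use u v in \<open>auto simp: Mid_def fep_char\<close>)
  moreover have "inj_on (\<lambda>m. u # m @ [v]) (Mid V T)" by (auto simp: inj_on_def)
  ultimately show ?thesis by (simp add: summable_on_reindex o_def)
qed

lemma deg_pos:
  assumes G: "simple_connected_graph V E" and x: "x \<in> V" and y: "y \<in> V" "y \<noteq> x"
  shows "deg V E x > 0"
proof -
  have fin: "finite V" and cl: "\<forall>a b. E a b \<longrightarrow> a \<in> V \<and> b \<in> V" using G by (auto simp: simple_connected_graph_def)
  have "E\<^sup>*\<^sup>* x y" using G x y by (auto simp: simple_connected_graph_def)
  then obtain z where "E x z" using y by (metis converse_rtranclpE)
  then have "z \<in> {y\<in>V. E x y}" using cl by auto
  then show ?thesis unfolding deg_def using fin by (auto simp: card_gt_0_iff)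
qed

lemma reach:
  assumes G: "simple_connected_graph V E"
  shows "E\<^sup>*\<^sup>* a b \<Longrightarrow> b \<in> T \<Longrightarrow> a \<in> V \<Longrightarrow>
    \<exists>xs. xs \<noteq> [] \<and> hd xs = a \<and> last xs \<in> T \<and> set xs \<subseteq> V \<and> successively E xs \<and>
         (\<forall>z\<in>set (butlast xs). z \<notin> T)"
proof (induction rule: converse_rtranclp_induct)
  case base
  then show ?case by (intro exI[of _ "[b]"]) auto
next
  case (step a c)
  have cV: "c \<in> V" using G step(1) by (auto simp: simple_connected_graph_def)
  show ?case
  proof (cases "a \<in> T")
    case True then show ?thesis using step by (intro exI[of _ "[a]"]) auto
  next
    case False
    obtain ys where ys: "ys \<noteq> []" "hd ys = c" "last ys \<in> T" "set ys \<subseteq> V" "successively E ys"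
      "\<forall>z\<in>set (butlast ys). z \<notin> T" using step cV by blast
    show ?thesis using ys False step(1,5)
      by (intro exI[of _ "a # ys"]) (auto simp: successively_Cons)
  qed
qed

lemma walk_pos:
  assumes dp: "\<forall>x\<in>V. deg V E x > 0"
  shows "successively E xs \<Longrightarrow> set xs \<subseteq> V \<Longrightarrow> walk_prob V E xs > 0"
  by (induction xs rule: induct_list012) (use dp in \<open>auto simp: trans_prob_def\<close>)



lemma part1:
  assumes G: "simple_connected_graph V E" and dp: "\<forall>x\<in>V. deg V E x > 0"
    and SV: "S \<subseteq> V" and u: "u \<in> S" and v: "v \<in> S"
  shows "mat_mult V (shortcut_Q V E S) (R_mat E S) u v = infsum (\<lambda>m. walk_prob V E (u # m @ [v])) (Mid V S)"
proof -
  have fin: "finite V" using G by (simp add: simple_connected_graph_def)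
  have finS: "finite S" using fin SV finite_subset by blast
  have uV: "u \<in> V" using u SV by auto
  define P where "P w = {m \<in> Mid V S. last (u # m) = w}" for w
  define K where "K w = infsum (\<lambda>m. walk_prob V E (u # m)) (P w)" for w
  let ?g = "\<lambda>m. walk_prob V E (u # m @ [v])"
  have gsum: "?g summable_on Mid V S" by (rule mid_summable[OF G dp uV]) (use v SV in auto)
  have key: "shortcut_Q V E S u w * R_mat E S w v = infsum ?g (P w)" if w: "w \<in> V" for w
  proof -
    let ?h = "\<lambda>(m,y). u # m @ [y]"
    have set_eq: "{xs \<in> first_entry_paths V S u. xs ! (length xs - 2) = w} = ?h ` (P w \<times> S)"
    proof (rule set_eqI)
      fix xs
      show "xs \<in> {xs \<in> first_entry_paths V S u. xs ! (length xs - 2) = w} \<longleftrightarrow> xs \<in> ?h ` (P w \<times> S)"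
      proof
        assume "xs \<in> {xs \<in> first_entry_paths V S u. xs ! (length xs - 2) = w}"
        then obtain m y where "xs = u # m @ [y]" "set m \<subseteq> V - S" "y \<in> S" "xs ! (length xs - 2) = w"
          unfolding fep_char by blast
        then show "xs \<in> ?h ` (P w \<times> S)" by (force simp: P_def Mid_def nth_len_m)
      next
        assume "xs \<in> ?h ` (P w \<times> S)"
        then obtain m y where "xs = u # m @ [y]" "m \<in> P w" "y \<in> S" by auto
        then show "xs \<in> {xs \<in> first_entry_paths V S u. xs ! (length xs - 2) = w}"
          using uV SV by (auto simp: P_def Mid_def nth_len_m fep_char)
      qed
    qed
    have inj: "inj_on ?h (P w \<times> S)" by (auto simp: inj_on_def)
    have sub: "?h ` (P w \<times> S) \<subseteq> first_entry_paths V S u"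
      using uV SV by (auto simp: P_def Mid_def fep_char)
    have eqf: "walk_prob V E (?h p) = (\<lambda>(m,y). walk_prob V E (u # m) * trans_prob V E w y) p"
      if "p \<in> P w \<times> S" for p
      using that walk_prob_snoc[of "u # _" V E] by (auto simp: P_def)
    have "walk_prob V E summable_on ?h ` (P w \<times> S)" by (rule sub_summable[OF G dp sub])
    then have "(walk_prob V E \<circ> ?h) summable_on (P w \<times> S)" using inj by (simp add: summable_on_reindex)
    then have summ: "(\<lambda>(m,y). walk_prob V E (u # m) * trans_prob V E w y) summable_on (P w \<times> S)"
      by (rule summable_on_cong[THEN iffD1, rotated]) (use eqf in auto)
    have Q: "shortcut_Q V E S u w = K w * (\<Sum>y\<in>S. trans_prob V E w y)"
    proof -
      have "shortcut_Q V E S u w = infsum (walk_prob V E \<circ> ?h) (P w \<times> S)"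
        unfolding shortcut_Q_def event_prob_def set_eq using inj by (simp add: infsum_reindex)
      also have "\<dots> = infsum (\<lambda>(m,y). walk_prob V E (u # m) * trans_prob V E w y) (P w \<times> S)"
        by (rule infsum_cong) (use eqf in auto)
      also have "\<dots> = infsum (\<lambda>m. infsum (\<lambda>y. walk_prob V E (u # m) * trans_prob V E w y) S) (P w)"
        using infsum_Sigma'_banach[OF summ] by simp
      also have "\<dots> = infsum (\<lambda>m. walk_prob V E (u # m) * (\<Sum>y\<in>S. trans_prob V E w y)) (P w)"
        using finS by (simp add: sum_distrib_left)
      also have "\<dots> = K w * (\<Sum>y\<in>S. trans_prob V E w y)"
        unfolding K_def by (rule infsum_cmult_left')
      finally show ?thesis .
    qed
    have c: "(\<Sum>y\<in>S. trans_prob V E w y) = real (degS E S w) / real (deg V E w)"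
      unfolding trans_prob_def degS_def by (subst sum.inter_filter[OF finS, symmetric]) simp
    have QR: "shortcut_Q V E S u w * R_mat E S w v = K w * trans_prob V E w v"
    proof (cases "E w v")
      case True
      have "v \<in> {y \<in> S. E w y}" using True v by auto
      then have "degS E S w > 0" unfolding degS_def using finS by (auto simp: card_gt_0_iff)
      moreover have "w \<noteq> v" using True G by (auto simp: simple_connected_graph_def)
      ultimately show ?thesis using True v dp w unfolding Q c R_mat_def trans_prob_def by auto
    next
      case False
      then show ?thesis unfolding Q c R_mat_def trans_prob_def by auto
    qed
    also have "\<dots> = infsum (\<lambda>m. walk_prob V E (u # m) * trans_prob V E w v) (P w)"
      unfolding K_def by (rule infsum_cmult_left'[symmetric])
    also have "\<dots> = infsum ?g (P w)"
      by (rule infsum_cong) (use walk_prob_snoc[of "u # _" V E] in \<open>auto simp: P_def\<close>)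
    finally show ?thesis .
  qed
  have "mat_mult V (shortcut_Q V E S) (R_mat E S) u v = (\<Sum>w\<in>V. infsum ?g (P w))"
    unfolding mat_mult_def by (rule sum.cong) (use key in auto)
  also have "\<dots> = infsum ?g (\<Union>w\<in>V. P w)"
    by (rule sum_infsum[OF fin]) (use gsum in \<open>auto simp: P_def intro: summable_on_subset\<close>)
  also have "(\<Union>w\<in>V. P w) = Mid V S"
  proof -
    have "last (u # m) \<in> V" if "m \<in> Mid V S" for m
      using that uV last_in_set[of "u # m"] by (auto simp: Mid_def simp del: last.simps)
    then show ?thesis unfolding P_def by blast
  qed
  finally show ?thesis .
qed



lemma part2:
  assumes G: "simple_connected_graph V E" and dp: "\<forall>x\<in>V. deg V E x > 0"
    and SV: "S \<subseteq> V" and u: "u \<in> S" and v': "v' \<in> S" "v' \<noteq> u"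
  shows "event_prob V E {xs \<in> first_entry_paths V S u. last xs = u} < 1"
proof -
  have uV: "u \<in> V" using u SV by auto
  have "E\<^sup>*\<^sup>* u v'" using G uV v' SV by (auto simp: simple_connected_graph_def)
  then obtain xs where xs: "xs \<noteq> []" "hd xs = u" "last xs \<in> S - {u}" "set xs \<subseteq> V" "successively E xs"
    "\<forall>z\<in>set (butlast xs). z \<notin> S - {u}"
    using reach[OF G, of u v' "S - {u}"] v' uV by blast
  have "u \<in> set xs" using xs(1,2) by (cases xs) auto
  then obtain ys zs where yz: "xs = ys @ u # zs" "u \<notin> set zs" by (metis split_list_last)
  have "zs \<noteq> []" using yz xs(3) by auto
  then obtain m v where mv: "zs = m @ [v]" by (metis append_butlast_last_id)
  have vS: "v \<in> S" "v \<noteq> u" "v \<in> V" using xs(3) yz mv SV by auto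
  have bl: "butlast xs = ys @ u # m" using yz mv by (simp add: butlast_append)
  have mS: "set m \<subseteq> V - S"
  proof
    fix z assume z: "z \<in> set m"
    then have "z \<in> set (butlast xs)" using bl by auto
    then have "z \<notin> S - {u}" using xs(6) by auto
    moreover have "z \<noteq> u" using z yz mv by auto
    moreover have "z \<in> V" using z xs(4) yz mv by auto
    ultimately show "z \<in> V - S" by auto
  qed
  let ?p = "u # m @ [v]"
  have "successively E (u # zs)" using xs(5) yz by (simp add: successively_append_iff)
  then have pos: "walk_prob V E ?p > 0" using walk_pos[OF dp] mv xs(4) yz by auto
  define Eu where "Eu = {xs \<in> first_entry_paths V S u. last xs = u}"
  define Ev where "Ev = {xs \<in> first_entry_paths V S u. last xs = v}"
  have pin: "?p \<in> Ev" unfolding Ev_def fep_char using mS vS uV by auto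
  have sEu: "walk_prob V E summable_on Eu" by (rule sub_summable[OF G dp, of _ S u]) (auto simp: Eu_def)
  have sEv: "walk_prob V E summable_on Ev" by (rule sub_summable[OF G dp, of _ S u]) (auto simp: Ev_def)
  have "walk_prob V E ?p = infsum (walk_prob V E) {?p}" by simp
  also have "\<dots> \<le> infsum (walk_prob V E) Ev"
    by (rule infsum_mono2) (use sEv pin walk_prob_nonneg in auto)
  finally have "infsum (walk_prob V E) Ev > 0" using pos by linarith
  moreover have "infsum (walk_prob V E) Eu + infsum (walk_prob V E) Ev = infsum (walk_prob V E) (Eu \<union> Ev)"
    by (rule infsum_Un_disjoint[symmetric]) (use sEu sEv vS in \<open>auto simp: Eu_def Ev_def\<close>)
  moreover have "infsum (walk_prob V E) (Eu \<union> Ev) \<le> infsum (walk_prob V E) (first_entry_paths V S u)"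
  proof -
    have "walk_prob V E summable_on (Eu \<union> Ev)"
      by (rule sub_summable[OF G dp, of _ S u]) (auto simp: Eu_def Ev_def)
    then show ?thesis
      by (rule infsum_mono2[OF _ fep_summable[OF G dp]]) (auto simp: Eu_def Ev_def walk_prob_nonneg)
  qed
  moreover have "infsum (walk_prob V E) (first_entry_paths V S u) \<le> 1" by (rule fep_le1[OF G dp])
  ultimately show ?thesis unfolding event_prob_def Eu_def by linarith
qed

lemma split_unique:
  "u \<notin> set a \<Longrightarrow> u \<notin> set a' \<Longrightarrow> a @ u # b = a' @ u # b' \<Longrightarrow> a = a' \<and> b = b'"
proof (induction a arbitrary: a')
  case Nil then show ?case by (cases a') auto
next
  case (Cons x a) then show ?case by (cases a') auto
qed

lemma part3:
  assumes G: "simple_connected_graph V E" and dp: "\<forall>x\<in>V. deg V E x > 0"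
    and SV: "S \<subseteq> V" and u: "u \<in> S" and v: "v \<in> S" "v \<noteq> u"
  shows "schur_S V E S u v =
     infsum (\<lambda>m. walk_prob V E (u # m @ [v])) (Mid V S) *
     (1 / (1 - infsum (\<lambda>m. walk_prob V E (u # m @ [u])) (Mid V S)))"
proof -
  have uV: "u \<in> V" and vV: "v \<in> V" using u v SV by auto
  let ?g = "\<lambda>m. walk_prob V E (u # m @ [v])"
  let ?f = "\<lambda>m. walk_prob V E (u # m @ [u])"
  let ?J = "\<lambda>(m1, m2). m1 @ u # m2"
  define d where "d = infsum ?g (Mid V (S - {u}))"
  define pv where "pv = infsum ?g (Mid V S)"
  define pu where "pu = infsum ?f (Mid V S)"
  have schur: "schur_S V E S u v = d"
    unfolding schur_S_def d_def using v uV vV by (simp add: event_last_prob)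
  have pu1: "pu < 1"
    using part2[OF G dp SV u v] event_last_prob[of V E S u u] uV u SV unfolding pu_def by auto
  have gs: "?g summable_on Mid V (S - {u})" by (rule mid_summable[OF G dp uV vV]) (use v in auto)
  have decomp: "Mid V (S - {u}) = Mid V S \<union> ?J ` (Mid V S \<times> Mid V (S - {u}))"
  proof (rule set_eqI)
    fix m
    show "m \<in> Mid V (S - {u}) \<longleftrightarrow> m \<in> Mid V S \<union> ?J ` (Mid V S \<times> Mid V (S - {u}))"
    proof
      assume m: "m \<in> Mid V (S - {u})"
      show "m \<in> Mid V S \<union> ?J ` (Mid V S \<times> Mid V (S - {u}))"
      proof (cases "u \<in> set m")
        case False then show ?thesis using m by (auto simp: Mid_def)
      next
        case True
        then obtain a b where ab: "m = a @ u # b" "u \<notin> set a" by (metis split_list_first)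
        then have "(a, b) \<in> Mid V S \<times> Mid V (S - {u})" using m by (auto simp: Mid_def)
        then show ?thesis using ab by force
      qed
    next
      assume "m \<in> Mid V S \<union> ?J ` (Mid V S \<times> Mid V (S - {u}))"
      then show "m \<in> Mid V (S - {u})" using uV by (auto simp: Mid_def)
    qed
  qed
  have disj: "Mid V S \<inter> ?J ` (Mid V S \<times> Mid V (S - {u})) = {}" using u by (auto simp: Mid_def)
  have inj: "inj_on ?J (Mid V S \<times> Mid V (S - {u}))"
  proof -
    have nu: "\<And>a. a \<in> Mid V S \<Longrightarrow> u \<notin> set a" using u by (auto simp: Mid_def)
    show ?thesis
    proof (rule inj_onI)
      fix p q assume pq: "p \<in> Mid V S \<times> Mid V (S - {u})" "q \<in> Mid V S \<times> Mid V (S - {u})" "?J p = ?J q"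
      obtain a b where p: "p = (a, b)" by (cases p)
      obtain a' b' where q: "q = (a', b')" by (cases q)
      have "a = a' \<and> b = b'"
        by (rule split_unique[of u]) (use pq p q nu in auto)
      then show "p = q" using p q by simp
    qed
  qed
  have s1: "?g summable_on Mid V S" by (rule summable_on_subset[OF gs]) (auto simp: Mid_def)
  have s2: "?g summable_on ?J ` (Mid V S \<times> Mid V (S - {u}))"
    by (rule summable_on_subset[OF gs]) (use decomp in blast)
  have gJ: "(?g \<circ> ?J) p = (\<lambda>(m1, m2). ?f m1 * ?g m2) p" for p
  proof (cases p)
    case (Pair m1 m2)
    have "walk_prob V E ((u # m1) @ u # (m2 @ [v])) = walk_prob V E ((u # m1) @ [u]) * walk_prob V E (u # m2 @ [v])"
      by (rule walk_prob_append)
    then show ?thesis using Pair by simp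
  qed
  have s3: "(\<lambda>(m1, m2). ?f m1 * ?g m2) summable_on (Mid V S \<times> Mid V (S - {u}))"
    using s2 inj by (simp add: summable_on_reindex gJ[abs_def])
  have "d = infsum ?g (Mid V S \<union> ?J ` (Mid V S \<times> Mid V (S - {u})))"
    unfolding d_def by (rule arg_cong[where f="infsum ?g"], rule decomp)
  then have "d = pv + infsum ?g (?J ` (Mid V S \<times> Mid V (S - {u})))"
    unfolding pv_def using infsum_Un_disjoint[OF s1 s2 disj] by simp
  also have "infsum ?g (?J ` (Mid V S \<times> Mid V (S - {u}))) = infsum (\<lambda>(m1, m2). ?f m1 * ?g m2) (Mid V S \<times> Mid V (S - {u}))"
    using inj by (simp add: infsum_reindex gJ[abs_def])
  also have "\<dots> = infsum (\<lambda>m1. infsum (\<lambda>m2. ?f m1 * ?g m2) (Mid V (S - {u}))) (Mid V S)"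
    using infsum_Sigma'_banach[OF s3] by simp
  also have "\<dots> = infsum (\<lambda>m1. ?f m1 * d) (Mid V S)"
    unfolding d_def by (simp add: infsum_cmult_right')
  also have "\<dots> = pu * d" unfolding pu_def by (rule infsum_cmult_left')
  finally have "d = pv + pu * d" .
  then have "d * (1 - pu) = pv" by (simp add: algebra_simps)
  then have "d = pv * (1 / (1 - pu))" using pu1 by (simp add: field_simps)
  then show ?thesis unfolding schur pv_def pu_def .
qed


theorem mainTheorem11:
  fixes V :: "'a set" and E :: "'a \<Rightarrow> 'a \<Rightarrow> bool" and S :: "'a set"
  assumes "simple_connected_graph V E"
    and "S \<subseteq> V" and "card S \<ge> 2"
  shows "(\<forall>u\<in>S. mat_mult V (shortcut_Q V E S) (R_mat E S) u u < 1
                 \<and> mat_mult V (shortcut_Q V E S) (R_mat E S) u u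
                     = event_prob V E {xs \<in> first_entry_paths V S u. last xs = u})
       \<and> (\<forall>u\<in>S. \<forall>v\<in>S. u \<noteq> v \<longrightarrow>
            schur_S V E S u v
              = mat_mult V (shortcut_Q V E S) (R_mat E S) u v
                / (1 - mat_mult V (shortcut_Q V E S) (R_mat E S) u u))"
proof -
  note G = assms(1) and SV = assms(2)
  have finS: "finite S" using assms(3) by (metis card.infinite not_numeral_le_zero)
  have "\<not> card S \<le> Suc 0" using assms(3) by simp
  then obtain a b where ab: "a \<in> S" "b \<in> S" "a \<noteq> b" using card_le_Suc0_iff_eq[OF finS] by blast
  have other: "\<exists>y\<in>S. y \<noteq> x" for x using ab by metis
  have dp: "\<forall>x\<in>V. deg V E x > 0"
  proof
    fix x assume x: "x \<in> V"
    obtain y where "y \<in> S" "y \<noteq> x" using other by blast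
    then show "deg V E x > 0" using deg_pos[OF G x] SV by auto
  qed
  have diag: "mat_mult V (shortcut_Q V E S) (R_mat E S) u u
                     = event_prob V E {xs \<in> first_entry_paths V S u. last xs = u}" if u: "u \<in> S" for u
    using part1[OF G dp SV u u] event_last_prob[of V E S u u] u SV by auto
  show ?thesis
  proof (intro conjI ballI impI)
    fix u assume u: "u \<in> S"
    obtain y where "y \<in> S" "y \<noteq> u" using other by blast
    then show "mat_mult V (shortcut_Q V E S) (R_mat E S) u u < 1"
      using diag[OF u] part2[OF G dp SV u] by auto
    show "mat_mult V (shortcut_Q V E S) (R_mat E S) u u
                     = event_prob V E {xs \<in> first_entry_paths V S u. last xs = u}" by (rule diag[OF u])
  next
    fix u v assume u: "u \<in> S" and v: "v \<in> S" and uv: "u \<noteq> v"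
    show "schur_S V E S u v
              = mat_mult V (shortcut_Q V E S) (R_mat E S) u v
                / (1 - mat_mult V (shortcut_Q V E S) (R_mat E S) u u)"
      using part3[OF G dp SV u v] uv part1[OF G dp SV u v] part1[OF G dp SV u u] by simp
  qed
qed

end
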